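(* Let $I$ be a semigroup (or a monoid), let $(A,\alpha)$ and $(B,\beta)$ be semi-invertible finite $I$-sets, and let $f:A\to B$ be a bijective $I$-equivariant function. Then the inverse $f^{-1}:B\to A$ is $I$-equivariant.
   Context: For a set $X$, $\mathrm{End}_l(X)$ denotes self-maps of $X$ written on the left with product $f\circ g$ ($g$ first); $\mathrm{End}_r(X)$ denotes self-maps written on the right, $x\mapsto(x)f$, with $(x)(fg)=((x)f)g$. An $I$-set is a set $X$ with a pair $\xi=(\xi_l,\xi_r)$ of semigroup (resp. monoid) homomorphisms $\xi_l:I\to\mathrm{End}_l(X)$, $\xi_r:I\to\mathrm{End}_r(X)$ with $(\xi_l(i)(x))\xi_r(j)=\xi_l(i)((x)\xi_r(j))$ for all $i,j,x$. A function $f:X\to Y$ between $I$-sets $(X,\xi)$, $(Y,\eta)$ is $I$-equivariant if $(f(\xi_l(i)(x)))\eta_r(i)=\eta_l(i)(f((x)\xi_r(i)))$ for all $i\in I$, $x\in X$. An $I$-set $(X,\xi)$ is semi-invertible if for every $i\in I$, at least one of $\xi_l(i)$, $\xi_r(i)$ is a bijection of $X$. *)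

theory Defs
  imports Main
begin

text \<open>An I-set is a carrier set X together with a left action xl (xl i x = xi_l(i)(x))
and a right action xr (xr i x = (x)xi_r(i)), both mapping X into X.
xi_l is a semigroup homomorphism into End_l(X): xi_l(ij) = xi_l(i) o xi_l(j);
xi_r is a semigroup homomorphism into End_r(X): (x)xi_r(ij) = ((x)xi_r(i))xi_r(j).\<close>

definition I_set :: "'a set \<Rightarrow> ('i::semigroup_mult \<Rightarrow> 'a \<Rightarrow> 'a) \<Rightarrow> ('i \<Rightarrow> 'a \<Rightarrow> 'a) \<Rightarrow> bool" where
  "I_set X xl xr \<longleftrightarrow>
     (\<forall>i. \<forall>x\<in>X. xl i x \<in> X) \<and>
     (\<forall>i. \<forall>x\<in>X. xr i x \<in> X) \<and>
     (\<forall>i j. \<forall>x\<in>X. xl (i * j) x = xl i (xl j x)) \<and>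
     (\<forall>i j. \<forall>x\<in>X. xr (i * j) x = xr j (xr i x)) \<and>
     (\<forall>i j. \<forall>x\<in>X. xr j (xl i x) = xl i (xr j x))"

definition semi_invertible :: "'a set \<Rightarrow> ('i \<Rightarrow> 'a \<Rightarrow> 'a) \<Rightarrow> ('i \<Rightarrow> 'a \<Rightarrow> 'a) \<Rightarrow> bool" where
  "semi_invertible X xl xr \<longleftrightarrow> (\<forall>i. bij_betw (xl i) X X \<or> bij_betw (xr i) X X)"

definition I_equivariant ::
  "'a set \<Rightarrow> ('i \<Rightarrow> 'a \<Rightarrow> 'a) \<Rightarrow> ('i \<Rightarrow> 'a \<Rightarrow> 'a) \<Rightarrow>
   ('i \<Rightarrow> 'b \<Rightarrow> 'b) \<Rightarrow> ('i \<Rightarrow> 'b \<Rightarrow> 'b) \<Rightarrow> ('a \<Rightarrow> 'b) \<Rightarrow> bool" where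
  "I_equivariant X xl xr yl yr f \<longleftrightarrow>
     (\<forall>i. \<forall>x\<in>X. yr i (f (xl i x)) = yl i (f (xr i x)))"

end

theory Submission
  imports Defs
begin

lemma core:
  assumes fin: "finite X"
    and pX: "\<forall>x\<in>X. p x \<in> X" and p'X: "\<forall>x\<in>X. p' x \<in> X"
    and qX: "\<forall>x\<in>X. q x \<in> X" and q'X: "\<forall>x\<in>X. q' x \<in> X"
    and pp: "\<forall>x\<in>X. p (p' x) = p' (p x)"
    and qq: "\<forall>x\<in>X. q (q' x) = q' (q x)"
    and eq: "\<forall>x\<in>X. q' (p x) = q (p' x)"
    and pb: "bij_betw p X X"
    and qb: "bij_betw q X X \<or> bij_betw q' X X"
    and w: "w \<in> X"
  shows "p' (q w) = p (q' w)"
proof -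
  define pinv where "pinv = inv_into X p"
  have pinvX: "\<And>x. x \<in> X \<Longrightarrow> pinv x \<in> X"
    unfolding pinv_def using pb by (metis bij_betw_def inv_into_into)
  have ppinv: "\<And>x. x \<in> X \<Longrightarrow> p (pinv x) = x"
    unfolding pinv_def using pb by (simp add: bij_betw_inv_into_right)
  define c where "c x = p' (pinv x)" for x
  have cX: "\<And>x. x \<in> X \<Longrightarrow> c x \<in> X" using pinvX p'X c_def by auto
  have q'c: "\<And>x. x \<in> X \<Longrightarrow> q' x = q (c x)"
  proof -
    fix x assume x: "x \<in> X"
    have "q' x = q' (p (pinv x))" using ppinv x by simp
    also have "\<dots> = q (c x)" using eq pinvX x c_def by auto
    finally show "q' x = q (c x)" .
  qed
  have qinj: "inj_on q X"
  proof (cases "bij_betw q X X")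
    case True then show ?thesis by (simp add: bij_betw_def)
  next
    case False
    then have "bij_betw q' X X" using qb by simp
    then have "X = q' ` X" by (simp add: bij_betw_def)
    also have "\<dots> \<subseteq> q ` X" using q'c cX by auto
    finally show ?thesis using fin finite_surj_inj by blast
  qed
  have qc: "\<And>x. x \<in> X \<Longrightarrow> q (c x) = c (q x)"
  proof -
    fix x assume x: "x \<in> X"
    have "q (q (c x)) = q (q' x)" using q'c x by simp
    also have "\<dots> = q' (q x)" using qq x by simp
    also have "\<dots> = q (c (q x))" using q'c qX x by simp
    finally show "q (c x) = c (q x)"
      using qinj qX cX x by (meson inj_onD)
  qed
  have "p (q' w) = p (q (c w))" using q'c w by simp
  also have "\<dots> = p (c (q w))" using qc w by simp
  also have "\<dots> = p (p' (pinv (q w)))" by (simp add: c_def)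
  also have "\<dots> = p' (p (pinv (q w)))" using pp pinvX qX w by simp
  also have "\<dots> = p' (q w)" using ppinv qX w by simp
  finally show ?thesis by simp
qed

lemma core2:
  assumes fin: "finite X"
    and pX: "\<forall>x\<in>X. p x \<in> X" and p'X: "\<forall>x\<in>X. p' x \<in> X"
    and qX: "\<forall>x\<in>X. q x \<in> X" and q'X: "\<forall>x\<in>X. q' x \<in> X"
    and pp: "\<forall>x\<in>X. p (p' x) = p' (p x)"
    and qq: "\<forall>x\<in>X. q (q' x) = q' (q x)"
    and eq: "\<forall>x\<in>X. q' (p x) = q (p' x)"
    and pb: "bij_betw p X X \<or> bij_betw p' X X"
    and qb: "bij_betw q X X \<or> bij_betw q' X X"
    and w: "w \<in> X"
  shows "p' (q w) = p (q' w)"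
proof (cases "bij_betw p X X")
  case True then show ?thesis using core[OF assms(1-8) True qb w] by simp
next
  case False
  then have "bij_betw p' X X" using pb by simp
  then have "p (q' w) = p' (q w)"
    using core[of X p' p q' q, OF fin p'X pX q'X qX] pp qq eq qb w by (metis)
  then show ?thesis by simp
qed

theorem mainTheorem5:
  fixes A :: "'a set" and B :: "'b set"
    and al ar :: "'i::semigroup_mult \<Rightarrow> 'a \<Rightarrow> 'a"
    and bl br :: "'i \<Rightarrow> 'b \<Rightarrow> 'b"
    and f :: "'a \<Rightarrow> 'b"
  assumes "I_set A al ar" and "I_set B bl br"
    and "finite A" and "finite B"
    and "semi_invertible A al ar" and "semi_invertible B bl br"
    and "bij_betw f A B"
    and "I_equivariant A al ar bl br f"
  shows "I_equivariant B bl br al ar (inv_into A f)"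
  unfolding I_equivariant_def
proof (intro allI ballI)
  fix i y assume y: "y \<in> B"
  define g where "g = inv_into A f"
  have gb: "bij_betw g B A" unfolding g_def using assms(7) by (rule bij_betw_inv_into)
  have gX: "\<And>y. y \<in> B \<Longrightarrow> g y \<in> A" using gb by (meson bij_betwE)
  have fX: "\<And>x. x \<in> A \<Longrightarrow> f x \<in> B" using assms(7) by (meson bij_betwE)
  have fg: "\<And>y. y \<in> B \<Longrightarrow> f (g y) = y" unfolding g_def using assms(7)
    by (simp add: bij_betw_inv_into_right)
  have gf: "\<And>x. x \<in> A \<Longrightarrow> g (f x) = x" unfolding g_def using assms(7)
    by (simp add: bij_betw_inv_into_left)
  define q where "q x = g (bl i (f x))" for x
  define q' where "q' x = g (br i (f x))" for x
  have A1: "\<forall>x\<in>A. al i x \<in> A" "\<forall>x\<in>A. ar i x \<in> A"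
    "\<forall>x\<in>A. al i (ar i x) = ar i (al i x)"
    using assms(1) unfolding I_set_def by auto
  have B1: "\<forall>x\<in>B. bl i x \<in> B" "\<forall>x\<in>B. br i x \<in> B"
    "\<forall>x\<in>B. bl i (br i x) = br i (bl i x)"
    using assms(2) unfolding I_set_def by auto
  have qX: "\<forall>x\<in>A. q x \<in> A" "\<forall>x\<in>A. q' x \<in> A"
    using B1 fX gX q_def q'_def by auto
  have qq: "\<forall>x\<in>A. q (q' x) = q' (q x)"
    using B1 fX gX fg q_def q'_def by auto
  have eq: "\<forall>x\<in>A. q' (al i x) = q (ar i x)"
    using assms(8) unfolding I_equivariant_def q_def q'_def by auto
  have pb: "bij_betw (al i) A A \<or> bij_betw (ar i) A A"
    using assms(5) unfolding semi_invertible_def by auto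
  have bij_tr: "bij_betw (\<lambda>x. g (h (f x))) A A" if "bij_betw h B B" for h
  proof -
    have "bij_betw (g \<circ> (h \<circ> f)) A A"
      using bij_betw_trans[OF bij_betw_trans[OF assms(7) that] gb] .
    then show ?thesis by (simp add: comp_def)
  qed
  have qb: "bij_betw q A A \<or> bij_betw q' A A"
    using assms(6) bij_tr unfolding semi_invertible_def q_def[abs_def] q'_def[abs_def] by blast
  have "ar i (q (g y)) = al i (q' (g y))"
    using core2[OF assms(3) A1(1,2) qX A1(3) qq eq pb qb gX[OF y]] .
  then show "ar i (inv_into A f (bl i y)) = al i (inv_into A f (br i y))"
    using fg y q_def q'_def g_def by simp
qed

end
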